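(* Let $K$ be a connected $2$-dimensional simplicial complex (with or without boundary), and let $f: K\to\mathbb{R}^3$ be a polyhedron. Then the following two statements are equivalent: (i) $f(K)$ is not embedded in $\mathbb{R}^3$, i.e. $f$ is not injective; (ii) there exist two simplices $\sigma_1,\sigma_2\in K$ with $\dim\sigma_1\leqslant 1$, and points $u_1\in\sigma_1$, $u_2\in\sigma_2$, such that $u_1\neq u_2$ and $f(u_1)=f(u_2)$.
   Context: A polyhedron is a continuous map $f: K\to\mathbb{R}^3$ from (the geometric realization of) a connected $2$-dimensional simplicial complex $K$ which is affine linear and nondegenerate (i.e. injective) on every simplex of $K$. The polyhedron is called embedded if $f$ is injective. *)

theory Defs
  imports "HOL-Analysis.Analysis"
begin

definition simplicial_complex :: "'v set set \<Rightarrow> bool" where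
  "simplicial_complex K \<longleftrightarrow>
     (\<forall>\<sigma>\<in>K. finite \<sigma> \<and> \<sigma> \<noteq> {} \<and> (\<forall>\<tau>. \<tau> \<subseteq> \<sigma> \<and> \<tau> \<noteq> {} \<longrightarrow> \<tau> \<in> K))"

text \<open>dimension of a simplex = number of vertices - 1; the complex is 2-dimensional\<close>
definition two_dimensional :: "'v set set \<Rightarrow> bool" where
  "two_dimensional K \<longleftrightarrow> (\<forall>\<sigma>\<in>K. card \<sigma> \<le> 3) \<and> (\<exists>\<sigma>\<in>K. card \<sigma> = 3)"

text \<open>connectedness via the 1-skeleton (equivalent to connectedness of the realization)\<close>
definition complex_connected :: "'v set set \<Rightarrow> bool" where
  "complex_connected K \<longleftrightarrow>
     (\<forall>v w. v \<in> \<Union>K \<and> w \<in> \<Union>K \<longrightarrow> (\<lambda>a b. {a, b} \<in> K)\<^sup>*\<^sup>* v w)"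

text \<open>Geometric realization: points are barycentric coordinate functions.\<close>
definition gsimplex :: "'v set \<Rightarrow> ('v \<Rightarrow> real) set" where
  "gsimplex \<sigma> = {x. (\<forall>v. 0 \<le> x v) \<and> (\<forall>v. v \<notin> \<sigma> \<longrightarrow> x v = 0) \<and> (\<Sum>v\<in>\<sigma>. x v) = 1}"

definition realization :: "'v set set \<Rightarrow> ('v \<Rightarrow> real) set" where
  "realization K = (\<Union>\<sigma>\<in>K. gsimplex \<sigma>)"

definition vertex_pt :: "'v \<Rightarrow> ('v \<Rightarrow> real)" where
  "vertex_pt v = (\<lambda>w. if w = v then 1 else 0)"

definition polyhedron :: "'v set set \<Rightarrow> (('v \<Rightarrow> real) \<Rightarrow> real^3) \<Rightarrow> bool" where
  "polyhedron K f \<longleftrightarrow>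
     continuous_on (realization K) f \<and>
     (\<forall>\<sigma>\<in>K. \<forall>x\<in>gsimplex \<sigma>. f x = (\<Sum>v\<in>\<sigma>. x v *\<^sub>R f (vertex_pt v))) \<and>
     (\<forall>\<sigma>\<in>K. inj_on f (gsimplex \<sigma>))"

end

theory Submission
  imports Defs "HOL-Analysis.Analysis"
begin

lemma kernel4:
  fixes A B C D :: "real^3"
  shows "\<exists>a b c d. (a,b,c,d) \<noteq> (0,0,0,0) \<and> a *\<^sub>R A + b *\<^sub>R B = c *\<^sub>R C + d *\<^sub>R D"
proof (rule ccontr)
  assume H: "\<not> ?thesis"
  define L where "L = (\<lambda>(w::real\<times>real\<times>real\<times>real). fst w *\<^sub>R A + fst (snd w) *\<^sub>R B - fst (snd (snd w)) *\<^sub>R C - snd (snd (snd w)) *\<^sub>R D)"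
  have lin: "linear L" unfolding L_def
    by (auto simp: linear_iff scaleR_add_left algebra_simps split: prod.splits)
  have "inj L"
  proof (rule linear_injective_0[OF lin, THEN iffD2], intro allI impI)
    fix w assume "L w = 0"
    then show "w = 0" using H unfolding L_def by (cases w) (auto simp: zero_prod_def algebra_simps)
  qed
  then have "DIM(real\<times>real\<times>real\<times>real) \<le> DIM(real^3)"
    using invariance_of_dimension[of UNIV L] linear_continuous_on[OF linear_conv_bounded_linear[THEN iffD1, OF lin]]
    by auto
  then show False by simp
qed


lemma neg_coord:
  fixes d :: "'v \<Rightarrow> real"
  assumes "finite S" "sum d S = 0" "v \<in> S" "d v \<noteq> 0"
  shows "\<exists>w\<in>S. d w < 0"
proof (rule ccontr)
  assume "\<not> ?thesis"
  then have "\<forall>w\<in>S. 0 \<le> d w" by force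
  then have "\<forall>w\<in>S. d w = 0" using sum_nonneg_eq_0_iff[OF assms(1)] assms(2) by blast
  then show False using assms by auto
qed

lemma move:
  fixes x y d1 d2 :: "'v \<Rightarrow> real"
  assumes fin: "finite \<sigma>" "finite \<tau>"
    and x: "x \<in> gsimplex \<sigma>" and y: "y \<in> gsimplex \<tau>"
    and d1o: "\<forall>v. v \<notin> \<sigma> \<longrightarrow> d1 v = 0" and d2o: "\<forall>v. v \<notin> \<tau> \<longrightarrow> d2 v = 0"
    and s1: "sum d1 \<sigma> = 0" and s2: "sum d2 \<tau> = 0"
    and nz: "(\<exists>v\<in>\<sigma>. d1 v \<noteq> 0) \<or> (\<exists>v\<in>\<tau>. d2 v \<noteq> 0)"
  shows "\<exists>t\<ge>0. (\<lambda>v. x v + t * d1 v) \<in> gsimplex \<sigma> \<and> (\<lambda>v. y v + t * d2 v) \<in> gsimplex \<tau>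
     \<and> ((\<exists>v\<in>\<sigma>. x v + t * d1 v = 0) \<or> (\<exists>v\<in>\<tau>. y v + t * d2 v = 0))"
proof -
  define M where "M = (\<lambda>v. x v / (- d1 v)) ` {v\<in>\<sigma>. d1 v < 0} \<union> (\<lambda>v. y v / (- d2 v)) ` {v\<in>\<tau>. d2 v < 0}"
  have finM: "finite M" unfolding M_def using fin by auto
  have neM: "M \<noteq> {}" unfolding M_def using nz neg_coord[OF fin(1) s1] neg_coord[OF fin(2) s2] by blast
  define t where "t = Min M"
  have tM: "t \<in> M" unfolding t_def using finM neM by simp
  have tle: "\<And>m. m \<in> M \<Longrightarrow> t \<le> m" unfolding t_def using finM by simp
  have xp: "\<And>v. 0 \<le> x v" and yp: "\<And>v. 0 \<le> y v" using x y unfolding gsimplex_def by auto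
  have t0: "0 \<le> t" using tM xp yp unfolding M_def by (auto simp: divide_nonneg_neg less_imp_le)
  have c1: "0 \<le> x v + t * d1 v" for v
  proof (cases "v \<in> \<sigma> \<and> d1 v < 0")
    case True
    then have "t \<le> x v / (- d1 v)" using tle unfolding M_def by auto
    then have "t * (- d1 v) \<le> x v" using True by (metis neg_0_less_iff_less pos_le_divide_eq)
    then show ?thesis by simp
  next
    case False
    then show ?thesis using d1o xp[of v] t0 by (cases "v \<in> \<sigma>") auto
  qed
  have c2: "0 \<le> y v + t * d2 v" for v
  proof (cases "v \<in> \<tau> \<and> d2 v < 0")
    case True
    then have "t \<le> y v / (- d2 v)" using tle unfolding M_def by auto
    then have "t * (- d2 v) \<le> y v" using True by (metis neg_0_less_iff_less pos_le_divide_eq)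
    then show ?thesis by simp
  next
    case False
    then show ?thesis using d2o yp[of v] t0 by (cases "v \<in> \<tau>") auto
  qed
  have g1: "(\<lambda>v. x v + t * d1 v) \<in> gsimplex \<sigma>"
    using x c1 d1o s1 unfolding gsimplex_def by (simp add: sum.distrib sum_distrib_left[symmetric])
  have g2: "(\<lambda>v. y v + t * d2 v) \<in> gsimplex \<tau>"
    using y c2 d2o s2 unfolding gsimplex_def by (simp add: sum.distrib sum_distrib_left[symmetric])
  have z: "(\<exists>v\<in>\<sigma>. x v + t * d1 v = 0) \<or> (\<exists>v\<in>\<tau>. y v + t * d2 v = 0)"
  proof -
    have "(\<exists>v\<in>\<sigma>. d1 v < 0 \<and> t = x v / (- d1 v)) \<or> (\<exists>v\<in>\<tau>. d2 v < 0 \<and> t = y v / (- d2 v))"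
      using tM unfolding M_def by blast
    then show ?thesis by (auto simp: field_simps)
  qed
  show ?thesis using t0 g1 g2 z by blast
qed


lemma sc_fin: "simplicial_complex K \<Longrightarrow> \<sigma> \<in> K \<Longrightarrow> finite \<sigma>"
  unfolding simplicial_complex_def by simp

lemma face_drop:
  assumes sc: "simplicial_complex K" and s: "\<sigma> \<in> K" and c: "card \<sigma> = 3"
    and v: "v \<in> \<sigma>" and x: "x \<in> gsimplex \<sigma>" and xv: "x v = 0"
  shows "\<sigma> - {v} \<in> K \<and> card (\<sigma> - {v}) \<le> 2 \<and> x \<in> gsimplex (\<sigma> - {v})"
proof -
  have fin: "finite \<sigma>" using sc s by (rule sc_fin)
  have c2: "card (\<sigma> - {v}) = 2" using c v fin by simp
  then have ne: "\<sigma> - {v} \<noteq> {}" by (metis card.empty zero_neq_numeral)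
  have cl: "\<forall>\<tau>. \<tau> \<subseteq> \<sigma> \<and> \<tau> \<noteq> {} \<longrightarrow> \<tau> \<in> K" using sc s unfolding simplicial_complex_def by blast
  have "\<sigma> - {v} \<in> K" using cl ne by blast
  moreover have "x \<in> gsimplex (\<sigma> - {v})"
  proof -
    have "(\<Sum>w\<in>\<sigma>. x w) = x v + (\<Sum>w\<in>\<sigma> - {v}. x w)" using fin v by (simp add: sum.remove)
    then have "(\<Sum>w\<in>\<sigma> - {v}. x w) = 1" using x xv unfolding gsimplex_def by simp
    moreover have "\<forall>w. w \<notin> \<sigma> - {v} \<longrightarrow> x w = 0" using x xv unfolding gsimplex_def by auto
    moreover have "\<forall>w. 0 \<le> x w" using x unfolding gsimplex_def by auto
    ultimately show ?thesis unfolding gsimplex_def by blast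
  qed
  ultimately show ?thesis using c2 by simp
qed

lemma shift:
  assumes P: "polyhedron K f" and s: "\<sigma> \<in> K" and fin: "finite \<sigma>"
    and x: "x \<in> gsimplex \<sigma>" and x': "(\<lambda>v. x v + t * d v) \<in> gsimplex \<sigma>"
  shows "f (\<lambda>v. x v + t * d v) = f x + t *\<^sub>R (\<Sum>v\<in>\<sigma>. d v *\<^sub>R f (vertex_pt v))"
proof -
  have e0: "\<forall>\<sigma>\<in>K. \<forall>x\<in>gsimplex \<sigma>. f x = (\<Sum>v\<in>\<sigma>. x v *\<^sub>R f (vertex_pt v))"
    using P unfolding polyhedron_def by (rule conjunct1[OF conjunct2])
  have e: "\<forall>x\<in>gsimplex \<sigma>. f x = (\<Sum>v\<in>\<sigma>. x v *\<^sub>R f (vertex_pt v))" using e0 s by (rule bspec)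
  have "f (\<lambda>v. x v + t * d v) = (\<Sum>v\<in>\<sigma>. (x v + t * d v) *\<^sub>R f (vertex_pt v))" using e x' by simp
  also have "\<dots> = (\<Sum>v\<in>\<sigma>. x v *\<^sub>R f (vertex_pt v)) + t *\<^sub>R (\<Sum>v\<in>\<sigma>. d v *\<^sub>R f (vertex_pt v))"
    by (simp add: scaleR_add_left sum.distrib scaleR_sum_right)
  also have "\<dots> = f x + t *\<^sub>R (\<Sum>v\<in>\<sigma>. d v *\<^sub>R f (vertex_pt v))" using e x by simp
  finally show ?thesis .
qed

lemma dir:
  fixes F :: "'v \<Rightarrow> real^3" and \<alpha> \<beta> :: real
  assumes "a \<noteq> b" "a \<noteq> c" "b \<noteq> c"
  defines "d \<equiv> (\<lambda>v. \<alpha> * (vertex_pt b v - vertex_pt a v) + \<beta> * (vertex_pt c v - vertex_pt a v))"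
  shows "(\<forall>v. v \<notin> {a,b,c} \<longrightarrow> d v = 0)" "sum d {a,b,c} = 0"
    "(\<Sum>v\<in>{a,b,c}. d v *\<^sub>R F v) = \<alpha> *\<^sub>R (F b - F a) + \<beta> *\<^sub>R (F c - F a)"
    "(\<alpha>, \<beta>) \<noteq> (0,0) \<Longrightarrow> \<exists>v\<in>{a,b,c}. d v \<noteq> 0"
proof -
  have da: "d a = - \<alpha> - \<beta>" and db: "d b = \<alpha>" and dc: "d c = \<beta>"
    using assms(1-3) by (simp_all add: d_def vertex_pt_def)
  show "\<forall>v. v \<notin> {a,b,c} \<longrightarrow> d v = 0" by (simp add: d_def vertex_pt_def)
  show "sum d {a,b,c} = 0" using assms(1-3) da db dc by simp
  show "(\<Sum>v\<in>{a,b,c}. d v *\<^sub>R F v) = \<alpha> *\<^sub>R (F b - F a) + \<beta> *\<^sub>R (F c - F a)"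
  proof -
    have "(\<Sum>v\<in>{a,b,c}. d v *\<^sub>R F v) = d a *\<^sub>R F a + d b *\<^sub>R F b + d c *\<^sub>R F c"
      using assms(1-3) by (simp add: algebra_simps)
    also have "\<dots> = (- \<alpha> - \<beta>) *\<^sub>R F a + \<alpha> *\<^sub>R F b + \<beta> *\<^sub>R F c"
      unfolding da db dc ..
    also have "\<dots> = \<alpha> *\<^sub>R (F b - F a) + \<beta> *\<^sub>R (F c - F a)"
      by (simp add: algebra_simps)
    finally show ?thesis .
  qed
  show "(\<alpha>, \<beta>) \<noteq> (0,0) \<Longrightarrow> \<exists>v\<in>{a,b,c}. d v \<noteq> 0" using db dc by auto
qed


lemma finish:
  assumes sc: "simplicial_complex K" and s: "\<sigma> \<in> K" and t: "\<tau> \<in> K"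
    and cs: "card \<sigma> = 3" and ct: "card \<tau> = 3"
    and x: "x \<in> gsimplex \<sigma>" and y: "y \<in> gsimplex \<tau>" and ne: "x \<noteq> y" and eq: "f x = f y"
    and z: "(\<exists>v\<in>\<sigma>. x v = 0) \<or> (\<exists>v\<in>\<tau>. y v = 0)"
  shows "\<exists>\<sigma>1\<in>K. \<exists>\<sigma>2\<in>K. card \<sigma>1 \<le> 2 \<and>
       (\<exists>u1\<in>gsimplex \<sigma>1. \<exists>u2\<in>gsimplex \<sigma>2. u1 \<noteq> u2 \<and> f u1 = f u2)"
  using z
proof
  assume "\<exists>v\<in>\<sigma>. x v = 0"
  then obtain v where "v \<in> \<sigma>" "x v = 0" by blast
  from face_drop[OF sc s cs this(1) x this(2)] show ?thesis using t y ne eq by blast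
next
  assume "\<exists>v\<in>\<tau>. y v = 0"
  then obtain v where "v \<in> \<tau>" "y v = 0" by blast
  from face_drop[OF sc t ct this(1) y this(2)] show ?thesis using s x ne eq by metis
qed

theorem lemma1:
  fixes K :: "'v set set" and f :: "('v \<Rightarrow> real) \<Rightarrow> real^3"
  assumes "simplicial_complex K" and "finite K"
    and "two_dimensional K" and "complex_connected K"
    and "polyhedron K f"
  shows "\<not> inj_on f (realization K) \<longleftrightarrow>
    (\<exists>\<sigma>1\<in>K. \<exists>\<sigma>2\<in>K. card \<sigma>1 \<le> 2 \<and>
       (\<exists>u1\<in>gsimplex \<sigma>1. \<exists>u2\<in>gsimplex \<sigma>2. u1 \<noteq> u2 \<and> f u1 = f u2))"
    (is "?L \<longleftrightarrow> ?R")
proof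
  assume ?R
  then obtain \<sigma>1 \<sigma>2 u1 u2 where "\<sigma>1 \<in> K" "\<sigma>2 \<in> K" "u1 \<in> gsimplex \<sigma>1" "u2 \<in> gsimplex \<sigma>2"
    "u1 \<noteq> u2" "f u1 = f u2" by blast
  then show ?L unfolding realization_def inj_on_def by blast
next
  assume ?L
  then obtain x y where "x \<in> realization K" "y \<in> realization K" "x \<noteq> y" "f x = f y"
    unfolding inj_on_def by blast
  then obtain \<sigma> \<tau> where s: "\<sigma> \<in> K" and t: "\<tau> \<in> K" and x: "x \<in> gsimplex \<sigma>" and y: "y \<in> gsimplex \<tau>"
    and ne: "x \<noteq> y" and eq: "f x = f y"
    unfolding realization_def by blast
  have sc: "simplicial_complex K" by fact
  have fins: "finite \<sigma>" using sc s by (rule sc_fin)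
  have fint: "finite \<tau>" using sc t by (rule sc_fin)
  have le3: "card \<sigma> \<le> 3" "card \<tau> \<le> 3" using assms(3) s t unfolding two_dimensional_def by blast+
  show ?R
  proof (cases "card \<sigma> \<le> 2")
    case True then show ?thesis using s t x y ne eq by blast
  next
    case False
    then have cs: "card \<sigma> = 3" using le3 by simp
    show ?thesis
    proof (cases "card \<tau> \<le> 2")
      case True then show ?thesis using s t x y ne eq by metis
    next
      case False
      then have ct: "card \<tau> = 3" using le3 by simp
      obtain a b c where abc: "\<sigma> = {a,b,c}" "a \<noteq> b" "a \<noteq> c" "b \<noteq> c"
        using cs by (auto simp: card_3_iff)
      obtain p q r where pqr: "\<tau> = {p,q,r}" "p \<noteq> q" "p \<noteq> r" "q \<noteq> r"
        using ct by (auto simp: card_3_iff)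
      define F where "F = (\<lambda>v. f (vertex_pt v))"
      obtain \<alpha> \<beta> \<gamma> \<delta> where nz: "(\<alpha>,\<beta>,\<gamma>,\<delta>) \<noteq> (0,0,0,0)"
        and ker: "\<alpha> *\<^sub>R (F b - F a) + \<beta> *\<^sub>R (F c - F a) = \<gamma> *\<^sub>R (F q - F p) + \<delta> *\<^sub>R (F r - F p)"
        using kernel4[of "F b - F a" "F c - F a" "F q - F p" "F r - F p"] by blast
      define d1 where "d1 = (\<lambda>v. \<alpha> * (vertex_pt b v - vertex_pt a v) + \<beta> * (vertex_pt c v - vertex_pt a v))"
      define d2 where "d2 = (\<lambda>v. \<gamma> * (vertex_pt q v - vertex_pt p v) + \<delta> * (vertex_pt r v - vertex_pt p v))"
      have D1: "\<forall>v. v \<notin> \<sigma> \<longrightarrow> d1 v = 0" "sum d1 \<sigma> = 0"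
        "(\<Sum>v\<in>\<sigma>. d1 v *\<^sub>R F v) = \<alpha> *\<^sub>R (F b - F a) + \<beta> *\<^sub>R (F c - F a)"
        "(\<alpha>, \<beta>) \<noteq> (0,0) \<Longrightarrow> \<exists>v\<in>\<sigma>. d1 v \<noteq> 0"
        unfolding abc(1) d1_def by (rule dir[OF abc(2-4)])+
      have D2: "\<forall>v. v \<notin> \<tau> \<longrightarrow> d2 v = 0" "sum d2 \<tau> = 0"
        "(\<Sum>v\<in>\<tau>. d2 v *\<^sub>R F v) = \<gamma> *\<^sub>R (F q - F p) + \<delta> *\<^sub>R (F r - F p)"
        "(\<gamma>, \<delta>) \<noteq> (0,0) \<Longrightarrow> \<exists>v\<in>\<tau>. d2 v \<noteq> 0"
        unfolding pqr(1) d2_def by (rule dir[OF pqr(2-4)])+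
      have keq: "(\<Sum>v\<in>\<sigma>. d1 v *\<^sub>R F v) = (\<Sum>v\<in>\<tau>. d2 v *\<^sub>R F v)"
        unfolding D1(3) D2(3) by (rule ker)
      have nzd: "(\<exists>v\<in>\<sigma>. d1 v \<noteq> 0) \<or> (\<exists>v\<in>\<tau>. d2 v \<noteq> 0)"
        using nz D1(4) D2(4) by auto
      have nzd': "(\<exists>v\<in>\<sigma>. - d1 v \<noteq> 0) \<or> (\<exists>v\<in>\<tau>. - d2 v \<noteq> 0)"
        using nzd by auto
      have keyeq: "f (\<lambda>v. x v + t * e1 v) = f (\<lambda>v. y v + t * e2 v)"
        if "(\<lambda>v. x v + t * e1 v) \<in> gsimplex \<sigma>" "(\<lambda>v. y v + t * e2 v) \<in> gsimplex \<tau>"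
          "(e1 = d1 \<and> e2 = d2) \<or> (e1 = (\<lambda>v. - d1 v) \<and> e2 = (\<lambda>v. - d2 v))" for t e1 e2
      proof -
        have "f (\<lambda>v. x v + t * e1 v) = f x + t *\<^sub>R (\<Sum>v\<in>\<sigma>. e1 v *\<^sub>R F v)"
          using shift[OF assms(5) s fins x that(1)] unfolding F_def .
        moreover have "f (\<lambda>v. y v + t * e2 v) = f y + t *\<^sub>R (\<Sum>v\<in>\<tau>. e2 v *\<^sub>R F v)"
          using shift[OF assms(5) t fint y that(2)] unfolding F_def .
        moreover have "(\<Sum>v\<in>\<sigma>. e1 v *\<^sub>R F v) = (\<Sum>v\<in>\<tau>. e2 v *\<^sub>R F v)"
          using that(3) keq by (auto simp: sum_negf)
        ultimately show ?thesis using eq by simp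
      qed
      obtain t where t0: "t \<ge> 0" and g1: "(\<lambda>v. x v + t * d1 v) \<in> gsimplex \<sigma>"
        and g2: "(\<lambda>v. y v + t * d2 v) \<in> gsimplex \<tau>"
        and z: "(\<exists>v\<in>\<sigma>. x v + t * d1 v = 0) \<or> (\<exists>v\<in>\<tau>. y v + t * d2 v = 0)"
        using move[OF fins fint x y D1(1) D2(1) D1(2) D2(2) nzd] by blast
      obtain t' where t0': "t' \<ge> 0" and g1': "(\<lambda>v. x v + t' * - d1 v) \<in> gsimplex \<sigma>"
        and g2': "(\<lambda>v. y v + t' * - d2 v) \<in> gsimplex \<tau>"
        and z': "(\<exists>v\<in>\<sigma>. x v + t' * - d1 v = 0) \<or> (\<exists>v\<in>\<tau>. y v + t' * - d2 v = 0)"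
        using move[OF fins fint x y, of "\<lambda>v. - d1 v" "\<lambda>v. - d2 v"] D1(1) D2(1) D1(2) D2(2) nzd'
        by (auto simp: sum_negf)
      show ?thesis
      proof (cases "(\<lambda>v. x v + t * d1 v) = (\<lambda>v. y v + t * d2 v)")
        case False
        show ?thesis
          by (rule finish[OF sc s t cs ct g1 g2 False keyeq[OF g1 g2] z]) simp
      next
        case True1: True
        show ?thesis
        proof (cases "(\<lambda>v. x v + t' * - d1 v) = (\<lambda>v. y v + t' * - d2 v)")
          case False
          show ?thesis
            by (rule finish[OF sc s t cs ct g1' g2' False keyeq[OF g1' g2'] z']) simp
        next
          case True
          have "x w = y w" for w
          proof -
            have e1: "x w + t * d1 w = y w + t * d2 w" using True1 by meson
            have e2: "x w + t' * - d1 w = y w + t' * - d2 w" using True by meson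
            show ?thesis
            proof (cases "t = 0")
              case True then show ?thesis using e1 by simp
            next
              case False
              then have "(t + t') * (d1 w - d2 w) = 0" using e1 e2 by (simp add: algebra_simps)
              then have "d1 w = d2 w" using False t0 t0' by simp
              then show ?thesis using e1 by simp
            qed
          qed
          then have "x = y" by blast
          then show ?thesis using ne by simp
        qed
      qed
    qed
  qed
qed

end
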